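(* If the set of all Diophantine equations which have a solution in non-negative integers is not recursive, then the set of all Diophantine equations which have at most finitely many solutions in non-negative integers is not recursively enumerable.
   Context: A Diophantine equation is an equation $D(x_1,\ldots,x_n)=0$ with $D\in\mathbb Z[x_1,\ldots,x_n]$; such equations are coded as natural numbers so that recursiveness and recursive enumerability of sets of them make sense. Solutions in non-negative integers are tuples in $\mathbb N^n$, $\mathbb N=\{0,1,2,\ldots\}$. *)

theory Defs
  imports Main "HOL-Library.Nat_Bijection"
begin

datatype recf = Z | S | Proj nat | Comp recf "recf list" | Prim recf recf | Mn recf

inductive eval :: "recf \<Rightarrow> nat list \<Rightarrow> nat \<Rightarrow> bool" where
  eval_Z: "eval Z xs 0"
| eval_S: "eval S (x # xs) (Suc x)"
| eval_Proj: "i < length xs \<Longrightarrow> eval (Proj i) xs (xs ! i)"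
| eval_Comp: "list_all2 (\<lambda>g y. eval g xs y) gs ys \<Longrightarrow> eval f ys z \<Longrightarrow> eval (Comp f gs) xs z"
| eval_Prim0: "eval f xs y \<Longrightarrow> eval (Prim f g) (0 # xs) y"
| eval_PrimS: "eval (Prim f g) (n # xs) y \<Longrightarrow> eval g (n # y # xs) z
               \<Longrightarrow> eval (Prim f g) (Suc n # xs) z"
| eval_Mn: "eval g (n # xs) 0 \<Longrightarrow> (\<forall>m<n. \<exists>y. y > 0 \<and> eval g (m # xs) y)
               \<Longrightarrow> eval (Mn g) xs n"

definition recursive_set :: "nat set \<Rightarrow> bool" where
  "recursive_set A \<longleftrightarrow> (\<exists>f. \<forall>x. eval f [x] (if x \<in> A then 1 else 0))"

definition re_set :: "nat set \<Rightarrow> bool" where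
  "re_set A \<longleftrightarrow> (\<exists>f. \<forall>x. x \<in> A \<longleftrightarrow> (\<exists>y. eval f [x] y))"

datatype dterm = Var nat | Const int | Add dterm dterm | Mul dterm dterm

fun dval :: "(nat \<Rightarrow> nat) \<Rightarrow> dterm \<Rightarrow> int" where
  "dval x (Var i) = int (x i)"
| "dval x (Const c) = c"
| "dval x (Add a b) = dval x a + dval x b"
| "dval x (Mul a b) = dval x a * dval x b"

fun vars :: "dterm \<Rightarrow> nat set" where
  "vars (Var i) = {i}"
| "vars (Const c) = {}"
| "vars (Add a b) = vars a \<union> vars b"
| "vars (Mul a b) = vars a \<union> vars b"

fun enc :: "dterm \<Rightarrow> nat" where
  "enc (Var i) = 4 * i"
| "enc (Const c) = 4 * int_encode c + 1"
| "enc (Add a b) = 4 * prod_encode (enc a, enc b) + 2"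
| "enc (Mul a b) = 4 * prod_encode (enc a, enc b) + 3"

text \<open>A Diophantine equation D(x_0,...,x_{n-1}) = 0 is a pair (n, D) with all variables of D
  below n; its code is prod_encode (n, enc D).\<close>
definition dioph_eq :: "nat \<Rightarrow> dterm \<Rightarrow> bool" where
  "dioph_eq n D \<longleftrightarrow> vars D \<subseteq> {..<n}"

definition code :: "nat \<Rightarrow> dterm \<Rightarrow> nat" where
  "code n D = prod_encode (n, enc D)"

text \<open>Solutions in N^n, represented canonically as functions vanishing outside {..<n}.\<close>
definition solutions :: "nat \<Rightarrow> dterm \<Rightarrow> (nat \<Rightarrow> nat) set" where
  "solutions n D = {x. (\<forall>i\<ge>n. x i = 0) \<and> dval x D = 0}"

definition Solvable :: "nat set" where
  "Solvable = {code n D | n D. dioph_eq n D \<and> solutions n D \<noteq> {}}"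

definition FinitelySolvable :: "nat set" where
  "FinitelySolvable = {code n D | n D. dioph_eq n D \<and> finite (solutions n D)}"

end

theory Submission
  imports Defs
begin

definition rc :: "nat \<Rightarrow> recf \<Rightarrow> (nat list \<Rightarrow> nat) \<Rightarrow> bool" where
  "rc a F h \<longleftrightarrow> (\<forall>xs. length xs = a \<longrightarrow> eval F xs (h xs))"

lemma rc_cong: "rc a F h \<Longrightarrow> (\<And>xs. length xs = a \<Longrightarrow> h xs = h' xs) \<Longrightarrow> rc a F h'"
  by (simp add: rc_def)

lemma rc_Z: "rc a Z (\<lambda>_. 0)"
  by (simp add: rc_def eval_Z)

lemma rc_Proj: "i < a \<Longrightarrow> rc a (Proj i) (\<lambda>xs. xs ! i)"
  by (simp add: rc_def eval_Proj)

lemma rc_Comp: "rc (length gs) F h \<Longrightarrow> list_all2 (\<lambda>G g. rc a G g) Gs gs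
  \<Longrightarrow> rc a (Comp F Gs) (\<lambda>xs. h (map (\<lambda>g. g xs) gs))"
  unfolding rc_def
proof (intro allI impI)
  fix xs :: "nat list" assume F: "\<forall>xs. length xs = length gs \<longrightarrow> eval F xs (h xs)"
    and L: "list_all2 (\<lambda>G g. \<forall>xs. length xs = a \<longrightarrow> eval G xs (g xs)) Gs gs" and len: "length xs = a"
  have "list_all2 (\<lambda>g y. eval g xs y) Gs (map (\<lambda>g. g xs) gs)"
    using L len by (auto simp: list_all2_conv_all_nth)
  then show "eval (Comp F Gs) xs (h (map (\<lambda>g. g xs) gs))"
    using F by (auto intro: eval_Comp)
qed

lemma rc_c1: "rc (Suc 0) F h \<Longrightarrow> rc a G g \<Longrightarrow> rc a (Comp F [G]) (\<lambda>xs. h [g xs])"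
  using rc_Comp[of "[g]" F h a "[G]"] by simp
lemma rc_c2: "rc (Suc (Suc 0)) F h \<Longrightarrow> rc a G g \<Longrightarrow> rc a G2 g2 \<Longrightarrow> rc a (Comp F [G,G2]) (\<lambda>xs. h [g xs, g2 xs])"
  using rc_Comp[of "[g,g2]" F h a "[G,G2]"] by simp
lemma rc_c3: "rc (Suc (Suc (Suc 0))) F h \<Longrightarrow> rc a G g \<Longrightarrow> rc a G2 g2 \<Longrightarrow> rc a G3 g3 \<Longrightarrow>
   rc a (Comp F [G,G2,G3]) (\<lambda>xs. h [g xs, g2 xs, g3 xs])"
  using rc_Comp[of "[g,g2,g3]" F h a "[G,G2,G3]"] by simp

lemma rc_S1: "rc (Suc 0) S (\<lambda>xs. Suc (xs ! 0))"
  unfolding rc_def proof (intro allI impI)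
  fix xs :: "nat list" assume "length xs = Suc 0"
  then obtain x where "xs = [x]" by (cases xs) auto
  then show "eval S xs (Suc (xs ! 0))" by (simp add: eval_S)
qed

lemma rc_S: "rc a G g \<Longrightarrow> rc a (Comp S [G]) (\<lambda>xs. Suc (g xs))"
  using rc_c1[OF rc_S1] by simp

fun pr :: "(nat list \<Rightarrow> nat) \<Rightarrow> (nat list \<Rightarrow> nat) \<Rightarrow> nat \<Rightarrow> nat list \<Rightarrow> nat" where
  "pr f g 0 ys = f ys"
| "pr f g (Suc m) ys = g (m # pr f g m ys # ys)"

lemma rc_Prim: "rc a F f \<Longrightarrow> rc (Suc (Suc a)) G g \<Longrightarrow> rc (Suc a) (Prim F G) (\<lambda>xs. pr f g (hd xs) (tl xs))"
  unfolding rc_def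
proof (intro allI impI)
  fix xs :: "nat list" assume F: "\<forall>xs. length xs = a \<longrightarrow> eval F xs (f xs)"
    and G: "\<forall>xs. length xs = Suc (Suc a) \<longrightarrow> eval G xs (g xs)" and len: "length xs = Suc a"
  then obtain n ys where xs: "xs = n # ys" and ly: "length ys = a" by (cases xs) auto
  have "eval (Prim F G) (m # ys) (pr f g m ys)" for m
    by (induction m) (auto intro: eval_Prim0 eval_PrimS simp: F G ly)
  then show "eval (Prim F G) xs (pr f g (hd xs) (tl xs))" by (simp add: xs)
qed

definition r_const :: "nat \<Rightarrow> recf" where
  "r_const c = ((\<lambda>G. Comp S [G]) ^^ c) Z"

lemma rc_const: "rc a (r_const c) (\<lambda>_. c)"
  by (induction c) (auto simp: r_const_def rc_Z dest: rc_S)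

definition "ADD = Prim (Proj 0) (Comp S [Proj 1])"
lemma rc_ADD: "rc (Suc (Suc 0)) ADD (\<lambda>xs. xs ! 0 + xs ! 1)"
proof -
  have 1: "rc (Suc (Suc 0)) ADD (\<lambda>xs. pr (\<lambda>ys. ys ! 0) (\<lambda>ys. Suc (ys ! 1)) (hd xs) (tl xs))"
    unfolding ADD_def by (intro rc_Prim[where a="Suc 0"] rc_Proj rc_S; simp)
  have 2: "pr (\<lambda>ys. ys ! 0) (\<lambda>ys. Suc (ys ! 1)) n ys = n + ys ! 0" for n ys
    by (induction n) auto
  show ?thesis
    by (rule rc_cong[OF 1], simp only: 2, auto simp: length_Suc_conv)
qed

definition "r_add G H = Comp ADD [G, H]"
lemma rc_add: "rc a G g \<Longrightarrow> rc a H h \<Longrightarrow> rc a (r_add G H) (\<lambda>xs. g xs + h xs)"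
  unfolding r_add_def using rc_c2[OF rc_ADD] by simp

definition "MUL = Prim Z (r_add (Proj 1) (Proj 2))"
lemma rc_MUL: "rc (Suc (Suc 0)) MUL (\<lambda>xs. xs ! 0 * xs ! 1)"
proof -
  have 1: "rc (Suc (Suc 0)) MUL (\<lambda>xs. pr (\<lambda>ys. 0) (\<lambda>ys. ys ! 1 + ys ! 2) (hd xs) (tl xs))"
    unfolding MUL_def by (intro rc_Prim[where a="Suc 0"] rc_Proj rc_add rc_Z; simp)
  have 2: "pr (\<lambda>ys. 0) (\<lambda>ys. ys ! 1 + ys ! 2) n ys = n * ys ! 0" for n ys
    by (induction n) auto
  show ?thesis
    by (rule rc_cong[OF 1], simp only: 2, auto simp: length_Suc_conv)
qed
definition "r_mul G H = Comp MUL [G, H]"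
lemma rc_mul: "rc a G g \<Longrightarrow> rc a H h \<Longrightarrow> rc a (r_mul G H) (\<lambda>xs. g xs * h xs)"
  unfolding r_mul_def using rc_c2[OF rc_MUL] by simp

definition "PRED = Prim Z (Proj 0)"
lemma rc_PRED: "rc (Suc 0) PRED (\<lambda>xs. xs ! 0 - 1)"
proof -
  have 1: "rc (Suc 0) PRED (\<lambda>xs. pr (\<lambda>ys. 0) (\<lambda>ys. ys ! 0) (hd xs) (tl xs))"
    unfolding PRED_def by (intro rc_Prim[where a=0] rc_Proj rc_Z; simp)
  have 2: "pr (\<lambda>ys. 0) (\<lambda>ys. ys ! 0) n ys = n - 1" for n ys
    by (cases n) auto
  show ?thesis
    by (rule rc_cong[OF 1], simp only: 2, auto simp: length_Suc_conv)
qed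
definition "r_pred G = Comp PRED [G]"
lemma rc_pred: "rc a G g \<Longrightarrow> rc a (r_pred G) (\<lambda>xs. g xs - 1)"
  unfolding r_pred_def using rc_c1[OF rc_PRED] by simp

definition "SUBR = Prim (Proj 0) (r_pred (Proj 1))"
lemma rc_SUBR: "rc (Suc (Suc 0)) SUBR (\<lambda>xs. xs ! 1 - xs ! 0)"
proof -
  have 1: "rc (Suc (Suc 0)) SUBR (\<lambda>xs. pr (\<lambda>ys. ys ! 0) (\<lambda>ys. ys ! 1 - 1) (hd xs) (tl xs))"
    unfolding SUBR_def by (intro rc_Prim[where a="Suc 0"] rc_Proj rc_pred; simp)
  have 2: "pr (\<lambda>ys. ys ! 0) (\<lambda>ys. ys ! 1 - 1) n ys = ys ! 0 - n" for n ys
    by (induction n) auto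
  show ?thesis
    by (rule rc_cong[OF 1], simp only: 2, auto simp: length_Suc_conv)
qed
definition "r_sub G H = Comp SUBR [H, G]"
lemma rc_sub: "rc a G g \<Longrightarrow> rc a H h \<Longrightarrow> rc a (r_sub G H) (\<lambda>xs. g xs - h xs)"
  unfolding r_sub_def using rc_c2[OF rc_SUBR] by simp

definition "r_sg G = r_sub (r_const 1) (r_sub (r_const 1) G)"
lemma rc_sg: "rc a G g \<Longrightarrow> rc a (r_sg G) (\<lambda>xs. if g xs = 0 then 0 else 1)"
  unfolding r_sg_def by (rule rc_cong, (rule rc_sub rc_const)+) auto

definition "r_cond C G H = r_add (r_mul (r_sub (r_const 1) C) G) (r_mul (r_sg C) H)"
lemma rc_cond: "rc a C c \<Longrightarrow> rc a G g \<Longrightarrow> rc a H h \<Longrightarrow>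
   rc a (r_cond C G H) (\<lambda>xs. if c xs = 0 then g xs else h xs)"
  unfolding r_cond_def by (rule rc_cong, (rule rc_sub rc_const rc_add rc_mul rc_sg | assumption)+) auto

definition "r_le G H = r_sub (r_const 1) (r_sub G H)"
lemma rc_le: "rc a G g \<Longrightarrow> rc a H h \<Longrightarrow> rc a (r_le G H) (\<lambda>xs. if g xs \<le> h xs then 1 else 0)"
  unfolding r_le_def by (rule rc_cong, (rule rc_sub rc_const | assumption)+) auto

definition "TRI = Prim Z (r_add (Proj 1) (Comp S [Proj 0]))"
lemma rc_TRI: "rc (Suc 0) TRI (\<lambda>xs. triangle (xs ! 0))"
proof -
  have 1: "rc (Suc 0) TRI (\<lambda>xs. pr (\<lambda>ys. 0) (\<lambda>ys. ys ! 1 + Suc (ys ! 0)) (hd xs) (tl xs))"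
    unfolding TRI_def by (intro rc_Prim[where a=0] rc_Proj rc_add rc_S rc_Z; simp)
  have 2: "pr (\<lambda>ys. 0) (\<lambda>ys. ys ! 1 + Suc (ys ! 0)) n ys = triangle n" for n ys
    by (induction n) auto
  show ?thesis
    by (rule rc_cong[OF 1], simp only: 2, auto simp: length_Suc_conv)
qed
definition "r_tri G = Comp TRI [G]"
lemma rc_tri: "rc a G g \<Longrightarrow> rc a (r_tri G) (\<lambda>xs. triangle (g xs))"
  unfolding r_tri_def using rc_c1[OF rc_TRI] by simp

definition "r_penc G H = r_add (r_tri (r_add G H)) G"
lemma rc_penc: "rc a G g \<Longrightarrow> rc a H h \<Longrightarrow> rc a (r_penc G H) (\<lambda>xs. prod_encode (g xs, h xs))"
  unfolding r_penc_def prod_encode_def by (rule rc_cong, (rule rc_add rc_tri | assumption)+) auto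

fun sd :: "nat \<Rightarrow> nat" where
  "sd 0 = 0"
| "sd (Suc z) = sd z + (if triangle (Suc (sd z)) \<le> Suc z then 1 else 0)"

lemma sd_bounds: "triangle (sd z) \<le> z \<and> z < triangle (Suc (sd z))"
proof (induction z)
  case 0 then show ?case by simp
next
  case (Suc z)
  show ?case
  proof (cases "triangle (Suc (sd z)) \<le> Suc z")
    case True
    then show ?thesis using Suc by simp
  next
    case False
    then show ?thesis using Suc by simp
  qed
qed

lemma prod_decode_sd: "prod_decode z = (z - triangle (sd z), sd z - (z - triangle (sd z)))"
proof -
  let ?s = "sd z" and ?m = "z - triangle (sd z)"
  have z: "z = triangle ?s + ?m" and m: "?m \<le> ?s" using sd_bounds[of z] by auto
  have "prod_decode z = prod_decode_aux ?s ?m" using prod_decode_triangle_add z by metis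
  also have "\<dots> = (?m, ?s - ?m)" using m by (simp add: prod_decode_aux.simps)
  finally show ?thesis .
qed

definition "SDIAG = Prim Z (r_add (Proj 1) (r_le (r_tri (Comp S [Proj 1])) (Comp S [Proj 0])))"
lemma rc_SDIAG: "rc (Suc 0) SDIAG (\<lambda>xs. sd (xs ! 0))"
proof -
  have 1: "rc (Suc 0) SDIAG (\<lambda>xs. pr (\<lambda>ys. 0) (\<lambda>ys. ys ! 1 + (if triangle (Suc (ys ! 1)) \<le> Suc (ys ! 0) then 1 else 0)) (hd xs) (tl xs))"
    unfolding SDIAG_def by (intro rc_Prim[where a=0] rc_Proj rc_add rc_S rc_Z rc_le rc_tri; simp)
  have 2: "pr (\<lambda>ys. 0) (\<lambda>ys. ys ! 1 + (if triangle (Suc (ys ! 1)) \<le> Suc (ys ! 0) then 1 else 0)) n ys = sd n" for n ys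
    by (induction n) auto
  show ?thesis
    by (rule rc_cong[OF 1], simp only: 2, auto simp: length_Suc_conv)
qed

definition "r_fst G = r_sub G (r_tri (Comp SDIAG [G]))"
definition "r_snd G = r_sub (Comp SDIAG [G]) (r_fst G)"
lemma rc_fst: "rc a G g \<Longrightarrow> rc a (r_fst G) (\<lambda>xs. fst (prod_decode (g xs)))"
  unfolding r_fst_def
  by (rule rc_cong, (rule rc_sub rc_tri rc_c1[OF rc_SDIAG] | assumption)+) (simp add: prod_decode_sd)
lemma rc_snd: "rc a G g \<Longrightarrow> rc a (r_snd G) (\<lambda>xs. snd (prod_decode (g xs)))"
  unfolding r_snd_def
  by (rule rc_cong, (rule rc_sub rc_fst rc_tri rc_c1[OF rc_SDIAG] | assumption)+) (simp add: prod_decode_sd)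

definition "MODK k = Prim Z (r_mul (Comp S [Proj 1]) (r_le (Comp S [Proj 1]) (r_const (k - 1))))"
lemma rc_MODK: assumes k: "0 < k" shows "rc (Suc 0) (MODK k) (\<lambda>xs. xs ! 0 mod k)"
proof -
  have 1: "rc (Suc 0) (MODK k) (\<lambda>xs. pr (\<lambda>ys. 0) (\<lambda>ys. Suc (ys ! 1) * (if Suc (ys ! 1) \<le> k - 1 then 1 else 0)) (hd xs) (tl xs))"
    unfolding MODK_def by (intro rc_Prim[where a=0] rc_Proj rc_mul rc_S rc_Z rc_le rc_const; simp)
  have 2: "pr (\<lambda>ys. 0) (\<lambda>ys. Suc (ys ! 1) * (if Suc (ys ! 1) \<le> k - 1 then 1 else 0)) n ys = n mod k" for n ys
  proof (induction n)
    case (Suc n)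
    have "n mod k < k" using k by simp
    then have e: "(Suc (n mod k) \<le> k - Suc 0) = (Suc (n mod k) \<noteq> k)" by arith
    show ?case using Suc e by (simp add: mod_Suc)
  qed simp
  show ?thesis
    by (rule rc_cong[OF 1], simp only: 2, auto simp: length_Suc_conv)
qed
definition "r_mod k G = Comp (MODK k) [G]"
lemma rc_mod: "0 < k \<Longrightarrow> rc a G g \<Longrightarrow> rc a (r_mod k G) (\<lambda>xs. g xs mod k)"
  unfolding r_mod_def using rc_c1[OF rc_MODK] by simp

definition "DIVK k = Prim Z (r_add (Proj 1) (r_sub (r_const 1) (r_le (Comp S [r_mod k (Proj 0)]) (r_const (k - 1)))))"
lemma rc_DIVK: assumes k: "0 < k" shows "rc (Suc 0) (DIVK k) (\<lambda>xs. xs ! 0 div k)"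
proof -
  have 1: "rc (Suc 0) (DIVK k) (\<lambda>xs. pr (\<lambda>ys. 0) (\<lambda>ys. ys ! 1 + (1 - (if Suc (ys ! 0 mod k) \<le> k - 1 then 1 else 0))) (hd xs) (tl xs))"
    unfolding DIVK_def by (intro rc_Prim[where a=0] rc_Proj rc_add rc_sub rc_S rc_Z rc_le rc_const rc_mod k; simp)
  have 2: "pr (\<lambda>ys. 0) (\<lambda>ys. ys ! 1 + (1 - (if Suc (ys ! 0 mod k) \<le> k - 1 then 1 else 0))) n ys = n div k" for n ys
  proof (induction n)
    case (Suc n)
    have "n mod k < k" using k by simp
    then have e: "(Suc (n mod k) \<le> k - Suc 0) = (Suc (n mod k) \<noteq> k)" by arith
    show ?case by (simp only: pr.simps Suc.IH) (simp add: e div_Suc mod_Suc)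
  qed simp
  show ?thesis
    by (rule rc_cong[OF 1], simp only: 2, auto simp: length_Suc_conv)
qed
definition "r_div k G = Comp (DIVK k) [G]"
lemma rc_div: "0 < k \<Longrightarrow> rc a G g \<Longrightarrow> rc a (r_div k G) (\<lambda>xs. g xs div k)"
  unfolding r_div_def using rc_c1[OF rc_DIVK] by simp

definition psnd :: "nat \<Rightarrow> nat" where "psnd x = snd (prod_decode x)"
definition pfst :: "nat \<Rightarrow> nat" where "pfst x = fst (prod_decode x)"

definition "ITS = Prim (Proj 0) (r_snd (Proj 1))"
lemma rc_ITS: "rc (Suc (Suc 0)) ITS (\<lambda>xs. (psnd ^^ (xs ! 0)) (xs ! 1))"
proof -
  have 1: "rc (Suc (Suc 0)) ITS (\<lambda>xs. pr (\<lambda>ys. ys ! 0) (\<lambda>ys. snd (prod_decode (ys ! 1))) (hd xs) (tl xs))"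
    unfolding ITS_def by (intro rc_Prim[where a="Suc 0"] rc_Proj rc_snd; simp)
  have 2: "pr (\<lambda>ys. ys ! 0) (\<lambda>ys. snd (prod_decode (ys ! 1))) n ys = (psnd ^^ n) (ys ! 0)" for n ys
    by (induction n) (auto simp: psnd_def)
  show ?thesis
    by (rule rc_cong[OF 1], simp only: 2, auto simp: length_Suc_conv)
qed
definition "r_its I T = Comp ITS [I, T]"
lemma rc_its: "rc a I i \<Longrightarrow> rc a T t \<Longrightarrow> rc a (r_its I T) (\<lambda>xs. (psnd ^^ i xs) (t xs))"
  unfolding r_its_def using rc_c2[OF rc_ITS] by simp

lemma rc_pfst: "rc a G g \<Longrightarrow> rc a (r_fst G) (\<lambda>xs. pfst (g xs))"
  unfolding pfst_def by (rule rc_fst)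
lemma rc_psnd: "rc a G g \<Longrightarrow> rc a (r_snd G) (\<lambda>xs. psnd (g xs))"
  unfolding psnd_def by (rule rc_snd)

fun oenc :: "nat option \<Rightarrow> nat" where
  "oenc None = 0" | "oenc (Some y) = Suc y"

definition mstep :: "nat \<Rightarrow> nat \<Rightarrow> nat \<Rightarrow> nat" where
  "mstep j r v = (if r = 0 then (if v = 0 then 1 else if v = 1 then j + 2 else 0) else r)"

primrec mst :: "(nat \<Rightarrow> nat option) \<Rightarrow> nat \<Rightarrow> nat" where
  "mst h 0 = 0"
| "mst h (Suc j) = mstep j (mst h j) (oenc (h j))"

primrec evb :: "recf \<Rightarrow> nat \<Rightarrow> nat list \<Rightarrow> nat option" where
  "evb Z k xs = Some 0"
| "evb S k xs = (case xs of [] \<Rightarrow> None | x # _ \<Rightarrow> Some (Suc x))"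
| "evb (Proj i) k xs = (if i < length xs then Some (xs ! i) else None)"
| "evb (Comp f gs) k xs = (let rs = map (\<lambda>g. evb g k xs) gs in
      if None \<in> set rs then None else evb f k (map the rs))"
| "evb (Prim f g) k xs = (case xs of [] \<Rightarrow> None | n # ys \<Rightarrow>
      rec_nat (evb f k ys) (\<lambda>m r. case r of None \<Rightarrow> None | Some y \<Rightarrow> evb g k (m # y # ys)) n)"
| "evb (Mn g) k xs = (let r = mst (\<lambda>m. evb g k (m # xs)) k in if 2 \<le> r then Some (r - 2) else None)"

lemma mst_stay: assumes "mst h j \<noteq> 0" "j \<le> j'" shows "mst h j' = mst h j"
  using assms(2) proof (induction j' rule: dec_induct)
  case (step j') then show ?case using assms(1) by (simp add: mstep_def)
qed simp

lemma mst_zero: "mst h j = 0 \<Longrightarrow> m < j \<Longrightarrow> \<exists>y>0. h m = Some y"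
proof (induction j)
  case (Suc j)
  have j0: "mst h j = 0"
  proof (rule ccontr)
    assume "mst h j \<noteq> 0" then have "mst h (Suc j) = mst h j" by (rule mst_stay) simp
    then show False using Suc.prems \<open>mst h j \<noteq> 0\<close> by simp
  qed
  show ?case
  proof (cases "m = j")
    case True
    with Suc.prems j0 show ?thesis
      by (cases "h j") (auto simp: mstep_def split: if_splits)
  next
    case False with Suc j0 show ?thesis by simp
  qed
qed simp

lemma mst_sound: "2 \<le> mst h j \<Longrightarrow> mst h j - 2 < j \<and> h (mst h j - 2) = Some 0 \<and>
    (\<forall>m < mst h j - 2. \<exists>y>0. h m = Some y)"
proof (induction j)
  case (Suc j)
  show ?case
  proof (cases "mst h j = 0")
    case False
    then have "mst h (Suc j) = mst h j" by (rule mst_stay) simp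
    with Suc show ?thesis by simp
  next
    case True
    then have v: "mst h (Suc j) = mstep j 0 (oenc (h j))" by simp
    with Suc.prems have "oenc (h j) = 1" by (auto simp: mstep_def split: if_splits)
    then have hj: "h j = Some 0" by (cases "h j") auto
    have "mst h (Suc j) = j + 2" using v \<open>oenc (h j) = 1\<close> by (simp add: mstep_def)
    then show ?thesis using hj mst_zero[OF True] by simp
  qed
qed simp

lemma mst_complete: assumes "h n = Some 0" "\<forall>m<n. \<exists>y>0. h m = Some y" "n < j"
  shows "mst h j = n + 2"
proof -
  have z: "mst h j = 0" if "j \<le> n" for j
    using that proof (induction j)
    case (Suc j)
    then have "j < n" by simp
    then obtain y where "y > 0" "h j = Some y" using assms(2) by blast
    then show ?case using Suc by (simp add: mstep_def)
  qed simp
  have "mst h (Suc n) = n + 2" using z[of n] assms(1) by (simp add: mstep_def)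
  moreover have "mst h j = mst h (Suc n)" by (rule mst_stay) (use \<open>mst h (Suc n) = n + 2\<close> assms(3) in auto)
  ultimately show ?thesis by simp
qed

lemma rec_nat_sound:
  assumes IHf: "\<And>y. evb f k ys = Some y \<Longrightarrow> eval f ys y"
    and IHg: "\<And>zs y. evb g k zs = Some y \<Longrightarrow> eval g zs y"
  shows "rec_nat (evb f k ys) (\<lambda>m r. case r of None \<Rightarrow> None | Some y \<Rightarrow> evb g k (m # y # ys)) n = Some z
    \<Longrightarrow> eval (Prim f g) (n # ys) z"
proof (induction n arbitrary: z)
  case 0 then show ?case by (auto intro: eval_Prim0 IHf)
next
  case (Suc n)
  then obtain y where y: "rec_nat (evb f k ys) (\<lambda>m r. case r of None \<Rightarrow> None | Some y \<Rightarrow> evb g k (m # y # ys)) n = Some y"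
    by (auto split: option.splits)
  with Suc show ?case by (auto intro: eval_PrimS IHg)
qed

lemma evb_sound: "evb f k xs = Some y \<Longrightarrow> eval f xs y"
proof (induction f arbitrary: xs y)
  case Z then show ?case by (auto intro: eval_Z)
next
  case S then show ?case by (auto intro: eval_S split: list.splits)
next
  case (Proj i) then show ?case by (auto intro: eval_Proj split: if_splits)
next
  case (Comp f gs)
  let ?rs = "map (\<lambda>g. evb g k xs) gs"
  have nn: "None \<notin> set ?rs" and ef: "evb f k (map the ?rs) = Some y"
    using Comp.prems by (auto simp: Let_def split: if_splits)
  have "list_all2 (\<lambda>g y. eval g xs y) gs (map the ?rs)"
  proof (rule list_all2_all_nthI)
    fix i assume i: "i < length gs"
    then have "evb (gs ! i) k xs \<noteq> None" using nn by (metis length_map nth_map nth_mem)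
    then show "eval (gs ! i) xs (map the ?rs ! i)"
      using Comp.IH i nth_mem by force
  qed simp
  then show ?case using Comp.IH ef by (blast intro: eval_Comp)
next
  case (Prim f g)
  then obtain n ys where xs: "xs = n # ys" by (auto split: list.splits)
  show ?case unfolding xs
    by (rule rec_nat_sound[where k=k]) (use Prim xs in auto)
next
  case (Mn g)
  let ?h = "\<lambda>m. evb g k (m # xs)"
  have r: "2 \<le> mst ?h k" and y: "y = mst ?h k - 2"
    using Mn.prems by (auto simp: Let_def split: if_splits)
  from mst_sound[OF r] show ?case unfolding y using Mn.IH
    by (intro eval_Mn) blast+
qed

lemma evb_mono: "evb f k xs = Some y \<Longrightarrow> k \<le> k' \<Longrightarrow> evb f k' xs = Some y"
proof (induction f arbitrary: xs y)
  case (Comp f gs)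
  let ?rs = "map (\<lambda>g. evb g k xs) gs"
  have nn: "None \<notin> set ?rs" and ef: "evb f k (map the ?rs) = Some y"
    using Comp.prems by (auto simp: Let_def split: if_splits)
  have eq: "map (\<lambda>g. evb g k' xs) gs = ?rs"
  proof (rule map_cong[OF refl])
    fix g assume g: "g \<in> set gs"
    then have "evb g k xs \<noteq> None" using nn by (metis image_eqI list.set_map)
    then show "evb g k' xs = evb g k xs" using Comp.IH(2)[OF g] Comp.prems(2) by auto
  qed
  show ?case using nn ef Comp.IH(1)[OF ef Comp.prems(2)] by (simp add: Let_def eq)
next
  case (Prim f g)
  show ?case
  proof (cases xs)
    case Nil then show ?thesis using Prim by simp
  next
    case (Cons n ys)
    have "rec_nat (evb f k ys) (\<lambda>m r. case r of None \<Rightarrow> None | Some y \<Rightarrow> evb g k (m # y # ys)) n = Some z \<Longrightarrow>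
        rec_nat (evb f k' ys) (\<lambda>m r. case r of None \<Rightarrow> None | Some y \<Rightarrow> evb g k' (m # y # ys)) n = Some z" for z
    proof (induction n arbitrary: z)
      case 0 then show ?case using Prim.IH(1) Prim.prems(2) by simp
    next
      case (Suc n)
      then obtain y where y: "rec_nat (evb f k ys) (\<lambda>m r. case r of None \<Rightarrow> None | Some y \<Rightarrow> evb g k (m # y # ys)) n = Some y"
        by (auto split: option.splits)
      with Suc show ?case using Prim.IH(2) Prim.prems(2) by auto
    qed
    then show ?thesis using Prim.prems Cons by simp
  qed
next
  case (Mn g)
  let ?h = "\<lambda>m. evb g k (m # xs)" and ?h' = "\<lambda>m. evb g k' (m # xs)"
  have r: "2 \<le> mst ?h k" and y: "y = mst ?h k - 2"
    using Mn.prems by (auto simp: Let_def split: if_splits)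
  note s = mst_sound[OF r]
  have "mst ?h' k' = y + 2"
  proof (rule mst_complete)
    show "?h' y = Some 0" using s y Mn.IH Mn.prems(2) by auto
    show "\<forall>m<y. \<exists>z>0. ?h' m = Some z" using s y Mn.IH Mn.prems(2) by blast
    show "y < k'" using s y Mn.prems(2) by auto
  qed
  then show ?case by (simp add: Let_def)
qed (auto split: list.splits)

lemma common_bound: "(\<And>m. m < (n::nat) \<Longrightarrow> \<exists>k::nat. \<forall>k'\<ge>k. P m k') \<Longrightarrow> \<exists>k::nat. \<forall>m<n. \<forall>k'\<ge>k. P m k'"
proof (induction n)
  case 0 then show ?case by simp
next
  case (Suc n)
  obtain k1 where k1: "\<forall>m<n. \<forall>k'\<ge>k1. P m k'" using Suc by auto
  obtain k2 where k2: "\<forall>k'\<ge>k2. P n k'" using Suc.prems[of n] by blast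
  show ?case
  proof (intro exI allI impI)
    fix m k' assume "m < Suc n" "max k1 k2 \<le> k'"
    then have "k1 \<le> k'" "k2 \<le> k'" by auto
    then show "P m k'" using k1 k2 \<open>m < Suc n\<close> less_Suc_eq by blast
  qed
qed

lemma evb_complete: "eval f xs y \<Longrightarrow> \<exists>k. evb f k xs = Some y"
proof (induction rule: eval.induct)
  case (eval_Comp xs gs ys f z)
  have "\<exists>k. \<forall>i<length gs. \<forall>k'\<ge>k. evb (gs ! i) k' xs = Some (ys ! i)"
  proof (rule common_bound)
    fix i assume "i < length gs"
    then obtain k where "evb (gs ! i) k xs = Some (ys ! i)"
      using eval_Comp.IH(1) by (auto simp: list_all2_conv_all_nth)
    then show "\<exists>k. \<forall>k'\<ge>k. evb (gs ! i) k' xs = Some (ys ! i)" using evb_mono by blast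
  qed
  then obtain k1 where k1: "\<forall>i<length gs. \<forall>k'\<ge>k1. evb (gs ! i) k' xs = Some (ys ! i)" by blast
  obtain k2 where k2: "evb f k2 ys = Some z" using eval_Comp.IH(2) by blast
  let ?k = "max k1 k2"
  have len: "length ys = length gs" using eval_Comp.IH(1) by (simp add: list_all2_lengthD)
  have rs: "map (\<lambda>g. evb g ?k xs) gs = map Some ys"
    by (rule nth_equalityI) (auto simp: len k1)
  have "evb f ?k ys = Some z" using evb_mono[OF k2] by simp
  then have "evb (Comp f gs) ?k xs = Some z" by (simp add: rs Let_def comp_def)
  then show ?case by blast
next
  case (eval_Prim0 f xs y g)
  then obtain k where "evb f k xs = Some y" by blast
  then show ?case by (intro exI[of _ k]) simp
next
  case (eval_PrimS f g n xs y z)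
  obtain k1 where k1: "evb (Prim f g) k1 (n # xs) = Some y" using eval_PrimS by blast
  obtain k2 where k2: "evb g k2 (n # y # xs) = Some z" using eval_PrimS by blast
  have a: "evb (Prim f g) (max k1 k2) (n # xs) = Some y" using evb_mono[OF k1] by simp
  have b: "evb g (max k1 k2) (n # y # xs) = Some z" using evb_mono[OF k2] by simp
  show ?case using a b by (intro exI[of _ "max k1 k2"]) simp
next
  case (eval_Mn g n xs)
  obtain k0 where k0: "evb g k0 (n # xs) = Some 0" using eval_Mn by blast
  have "\<exists>k. \<forall>m<n. \<forall>k'\<ge>k. \<exists>y>0. evb g k' (m # xs) = Some y"
  proof (rule common_bound)
    fix m assume "m < n"
    then obtain y k where "y > 0" "evb g k (m # xs) = Some y" using eval_Mn.IH(2) by blast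
    then show "\<exists>k. \<forall>k'\<ge>k. \<exists>y>0. evb g k' (m # xs) = Some y" using evb_mono by blast
  qed
  then obtain k1 where k1: "\<forall>m<n. \<forall>k'\<ge>k1. \<exists>y>0. evb g k' (m # xs) = Some y" by blast
  let ?k = "max (max k0 k1) (Suc n)"
  have "mst (\<lambda>m. evb g ?k (m # xs)) ?k = n + 2"
    by (rule mst_complete) (auto simp: k1 intro: evb_mono[OF k0])
  then show ?case by (intro exI[of _ ?k]) (simp add: Let_def)
qed (auto intro: exI[of _ 0])

primrec PRODL :: "recf list \<Rightarrow> recf" where
  "PRODL [] = r_const 1"
| "PRODL (G # Gs) = r_mul (r_sg G) (PRODL Gs)"

lemma rc_PRODL: "list_all2 (\<lambda>G g. rc a G g) Gs gs \<Longrightarrow>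
   rc a (PRODL Gs) (\<lambda>xs. prod_list (map (\<lambda>g. if g xs = 0 then 0 else 1) gs))"
proof (induction rule: list_all2_induct)
  case Nil then show ?case using rc_const[of a 1] by simp
next
  case (Cons G g Gs gs)
  show ?case using rc_mul[OF rc_sg[OF Cons(1)] Cons(3)] by simp
qed

lemma rc_projs: "(\<forall>i\<in>set is. i < a) \<Longrightarrow> list_all2 (\<lambda>G g. rc a G g) (map Proj is) (map (\<lambda>i xs. xs ! i) is)"
  by (induction "is") (auto intro: rc_Proj)

lemma map_nth_upt_drop: "length zs = n \<Longrightarrow> map (nth zs) [m..<n] = drop m zs"
  by (rule nth_equalityI) auto

definition "r_mst J R V = r_cond R (r_cond V (r_const 1) (r_cond (r_pred V) (r_add J (r_const 2)) Z)) R"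
lemma rc_mst: "rc a J j \<Longrightarrow> rc a R r \<Longrightarrow> rc a V v \<Longrightarrow> rc a (r_mst J R V) (\<lambda>xs. mstep (j xs) (r xs) (v xs))"
  unfolding r_mst_def
  by (rule rc_cong, (rule rc_cond rc_const rc_pred rc_add rc_Z | assumption)+) (auto simp: mstep_def)

primrec T :: "recf \<Rightarrow> nat \<Rightarrow> recf" where
  "T Z a = r_const 1"
| "T S a = (case a of 0 \<Rightarrow> Z | Suc _ \<Rightarrow> Comp S [Comp S [Proj 1]])"
| "T (Proj i) a = (if i < a then Comp S [Proj (Suc i)] else Z)"
| "T (Comp f gs) a = r_mul (PRODL (map (\<lambda>g. T g a) gs))
      (Comp (T f (length gs)) (Proj 0 # map (\<lambda>g. r_pred (T g a)) gs))"
| "T (Prim f g) a = (case a of 0 \<Rightarrow> Z | Suc b \<Rightarrow>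
      Comp (Prim (T f b) (r_mul (r_sg (Proj 1))
          (Comp (T g (Suc (Suc b))) (Proj 2 # Proj 0 # r_pred (Proj 1) # map Proj [3..<b+3]))))
        (Proj 1 # Proj 0 # map Proj [2..<Suc (Suc b)]))"
| "T (Mn g) a = r_pred (Comp (Prim Z (r_mst (Proj 0) (Proj 1)
          (Comp (T g (Suc a)) (Proj 2 # Proj 0 # map Proj [3..<a+3]))))
        (Proj 0 # map Proj [0..<Suc a]))"

lemma comp_eq: "prod_list (map (\<lambda>g. if oenc (evb g k ys) = 0 then 0 else 1) gs) *
    oenc (evb f k (map (\<lambda>g. oenc (evb g k ys) - 1) gs)) = oenc (evb (Comp f gs) k ys)"
proof (cases "None \<in> set (map (\<lambda>g. evb g k ys) gs)")
  case True
  then obtain g where g: "g \<in> set gs" "evb g k ys = None" by auto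
  have "(\<lambda>g. if oenc (evb g k ys) = 0 then 0 else 1 :: nat) g \<in> set (map (\<lambda>g. if oenc (evb g k ys) = 0 then 0 else 1 :: nat) gs)"
    unfolding set_map using g(1) by (rule imageI)
  then have "0 \<in> set (map (\<lambda>g. if oenc (evb g k ys) = 0 then 0 else 1 :: nat) gs)"
    using g(2) by simp
  then have z: "prod_list (map (\<lambda>g. if oenc (evb g k ys) = 0 then 0 else 1 :: nat) gs) = 0"
    by (simp only: prod_list_zero_iff)
  have n: "evb (Comp f gs) k ys = None" using True by (simp only: evb.simps Let_def if_True)
  show ?thesis by (simp only: z n) simp
next
  case False
  then have s: "\<And>g. g \<in> set gs \<Longrightarrow> \<exists>y. evb g k ys = Some y"
  proof -
    fix g assume "g \<in> set gs"
    then have "evb g k ys \<in> set (map (\<lambda>g. evb g k ys) gs)" unfolding set_map by (rule imageI)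
    note m = this
    have "evb g k ys \<noteq> None"
    proof
      assume "evb g k ys = None"
      then have "None \<in> set (map (\<lambda>g. evb g k ys) gs)" using m by (simp only:)
      with False show False by contradiction
    qed
    then show "\<exists>y. evb g k ys = Some y" by auto
  qed
  have e1: "map (\<lambda>g. if oenc (evb g k ys) = 0 then 0 else 1 :: nat) gs = map (\<lambda>g. 1) gs"
    by (rule map_cong[OF refl]) (auto dest!: s)
  have e2: "prod_list (map (\<lambda>g. 1 :: nat) gs) = 1" by (induction gs) auto
  have e3: "map (\<lambda>g. oenc (evb g k ys) - 1) gs = map the (map (\<lambda>g. evb g k ys) gs)"
    by (auto dest!: s)
  have e4: "evb (Comp f gs) k ys = evb f k (map the (map (\<lambda>g. evb g k ys) gs))"
    using False by (simp only: evb.simps Let_def if_False)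
  show ?thesis by (simp only: e1 e2 e3 e4)
qed

lemma rc_Comp': "rc n F h \<Longrightarrow> length gs = n \<Longrightarrow> list_all2 (\<lambda>G g. rc a G g) Gs gs
  \<Longrightarrow> rc a (Comp F Gs) (\<lambda>xs. h (map (\<lambda>g. g xs) gs))"
  using rc_Comp by blast

lemma rc_T_Prim:
  assumes IHf: "\<And>a. rc (Suc a) (T f a) (\<lambda>xs. oenc (evb f (hd xs) (tl xs)))"
    and IHg: "\<And>a. rc (Suc a) (T g a) (\<lambda>xs. oenc (evb g (hd xs) (tl xs)))"
  shows "rc (Suc a) (T (Prim f g) a) (\<lambda>xs. oenc (evb (Prim f g) (hd xs) (tl xs)))"
proof (cases a)
  case 0 then show ?thesis by (auto intro!: rc_cong[OF rc_Z] simp: length_Suc_conv)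
next
  case (Suc b)
  define Ff where "Ff = (\<lambda>xs. oenc (evb f (hd xs) (tl xs)))"
  define Gf where "Gf = (\<lambda>zs::nat list. (if zs ! 1 = 0 then 0 else 1) * oenc (evb g (zs ! 2) (zs ! 0 # (zs ! 1 - 1) # drop 3 zs)))"
  define GT where "GT = r_mul (r_sg (Proj 1)) (Comp (T g (Suc (Suc b))) (Proj 2 # Proj 0 # r_pred (Proj 1) # map Proj [3..<b+3]))"
  have La: "list_all2 (\<lambda>G g. rc (Suc (Suc (Suc b))) G g) (Proj 2 # Proj 0 # r_pred (Proj 1) # map Proj [3..<b+3])
     ((\<lambda>zs. zs ! 2) # (\<lambda>zs. zs ! 0) # (\<lambda>zs. zs ! 1 - 1) # map (\<lambda>i zs. zs ! i) [3..<b+3])"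
    by (intro list_all2_Cons[THEN iffD2] conjI rc_Proj rc_pred rc_projs) auto
  have Cg: "rc (Suc (Suc (Suc b))) (Comp (T g (Suc (Suc b))) (Proj 2 # Proj 0 # r_pred (Proj 1) # map Proj [3..<b+3]))
     (\<lambda>xs. oenc (evb g (hd (map (\<lambda>g. g xs) ((\<lambda>zs. zs ! 2) # (\<lambda>zs. zs ! 0) # (\<lambda>zs. zs ! 1 - 1) # map (\<lambda>i zs. zs ! i) [3..<b+3])))
                  (tl (map (\<lambda>g. g xs) ((\<lambda>zs. zs ! 2) # (\<lambda>zs. zs ! 0) # (\<lambda>zs. zs ! 1 - 1) # map (\<lambda>i zs. zs ! i) [3..<b+3])))))"
    by (rule rc_Comp'[OF IHg[of "Suc (Suc b)"] _ La]) simp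
  have G: "rc (Suc (Suc (Suc b))) GT Gf"
    unfolding GT_def
  proof (rule rc_cong[OF rc_mul[OF rc_sg[OF rc_Proj] Cg]])
    fix zs :: "nat list" assume l: "length zs = Suc (Suc (Suc b))"
    have "map (nth zs) [3..<b+3] = drop 3 zs" using map_nth_upt_drop[of zs "b+3" 3] l by simp
    then show "(if zs ! 1 = 0 then 0 else 1) * oenc (evb g (hd (map (\<lambda>g. g zs) ((\<lambda>zs. zs ! 2) # (\<lambda>zs. zs ! 0) # (\<lambda>zs. zs ! 1 - 1) # map (\<lambda>i zs. zs ! i) [3..<b+3])))
                  (tl (map (\<lambda>g. g zs) ((\<lambda>zs. zs ! 2) # (\<lambda>zs. zs ! 0) # (\<lambda>zs. zs ! 1 - 1) # map (\<lambda>i zs. zs ! i) [3..<b+3])))) = Gf zs"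
      unfolding Gf_def by (simp add: comp_def)
  qed simp
  have Pr: "rc (Suc (Suc b)) (Prim (T f b) GT) (\<lambda>xs. pr Ff Gf (hd xs) (tl xs))"
    unfolding Ff_def by (rule rc_Prim[OF IHf G])
  have Lo: "list_all2 (\<lambda>G g. rc (Suc a) G g) (Proj 1 # Proj 0 # map Proj [2..<Suc (Suc b)])
     ((\<lambda>zs. zs ! 1) # (\<lambda>zs. zs ! 0) # map (\<lambda>i zs. zs ! i) [2..<Suc (Suc b)])"
    by (intro list_all2_Cons[THEN iffD2] conjI rc_Proj rc_projs ballI) (auto simp: Suc)
  have Co: "rc (Suc a) (Comp (Prim (T f b) GT) (Proj 1 # Proj 0 # map Proj [2..<Suc (Suc b)]))
     (\<lambda>xs. pr Ff Gf (hd (map (\<lambda>g. g xs) ((\<lambda>zs. zs ! 1) # (\<lambda>zs. zs ! 0) # map (\<lambda>i zs. zs ! i) [2..<Suc (Suc b)])))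
        (tl (map (\<lambda>g. g xs) ((\<lambda>zs. zs ! 1) # (\<lambda>zs. zs ! 0) # map (\<lambda>i zs. zs ! i) [2..<Suc (Suc b)]))))"
    by (rule rc_Comp'[OF Pr _ Lo]) (simp add: numeral_2_eq_2; arith)
  have tt: "T (Prim f g) a = Comp (Prim (T f b) GT) (Proj 1 # Proj 0 # map Proj [2..<Suc (Suc b)])"
    by (simp add: Suc GT_def)
  show ?thesis unfolding tt
  proof (rule rc_cong[OF Co])
    fix xs :: "nat list" assume "length xs = Suc a"
    then obtain k n ys where xs: "xs = k # n # ys" and ly: "length ys = b"
      by (auto simp: length_Suc_conv Suc)
    have pe: "pr Ff Gf m (k # ys) = oenc (rec_nat (evb f k ys) (\<lambda>m r. case r of None \<Rightarrow> None | Some y \<Rightarrow> evb g k (m # y # ys)) m)" for m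
    proof (induction m)
      case 0 then show ?case by (simp add: Ff_def)
    next
      case (Suc m)
      show ?case
        by (simp only: pr.simps Suc.IH) (auto simp: Gf_def split: option.splits)
    qed
    have "map (nth xs) [2..<Suc (Suc b)] = ys"
      using map_nth_upt_drop[of xs "Suc (Suc b)" 2] ly xs by simp
    then show "pr Ff Gf (hd (map (\<lambda>g. g xs) ((\<lambda>zs. zs ! 1) # (\<lambda>zs. zs ! 0) # map (\<lambda>i zs. zs ! i) [2..<Suc (Suc b)])))
        (tl (map (\<lambda>g. g xs) ((\<lambda>zs. zs ! 1) # (\<lambda>zs. zs ! 0) # map (\<lambda>i zs. zs ! i) [2..<Suc (Suc b)]))) =
      oenc (evb (Prim f g) (hd xs) (tl xs))"
      using pe[of n] by (simp add: xs comp_def)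
  qed
qed

lemma rc_T_Mn:
  assumes IHg: "\<And>a. rc (Suc a) (T g a) (\<lambda>xs. oenc (evb g (hd xs) (tl xs)))"
  shows "rc (Suc a) (T (Mn g) a) (\<lambda>xs. oenc (evb (Mn g) (hd xs) (tl xs)))"
proof -
  define Gf where "Gf = (\<lambda>zs::nat list. mstep (zs ! 0) (zs ! 1) (oenc (evb g (zs ! 2) (zs ! 0 # drop 3 zs))))"
  define GT where "GT = r_mst (Proj 0) (Proj 1) (Comp (T g (Suc a)) (Proj 2 # Proj 0 # map Proj [3..<a+3]))"
  have La: "list_all2 (\<lambda>G g. rc (Suc (Suc (Suc a))) G g) (Proj 2 # Proj 0 # map Proj [3..<a+3])
     ((\<lambda>zs. zs ! 2) # (\<lambda>zs. zs ! 0) # map (\<lambda>i zs. zs ! i) [3..<a+3])"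
    by (intro list_all2_Cons[THEN iffD2] conjI rc_Proj rc_projs) auto
  have Cg: "rc (Suc (Suc (Suc a))) (Comp (T g (Suc a)) (Proj 2 # Proj 0 # map Proj [3..<a+3]))
     (\<lambda>xs. oenc (evb g (hd (map (\<lambda>g. g xs) ((\<lambda>zs. zs ! 2) # (\<lambda>zs. zs ! 0) # map (\<lambda>i zs. zs ! i) [3..<a+3])))
                  (tl (map (\<lambda>g. g xs) ((\<lambda>zs. zs ! 2) # (\<lambda>zs. zs ! 0) # map (\<lambda>i zs. zs ! i) [3..<a+3])))))"
    by (rule rc_Comp'[OF IHg[of "Suc a"] _ La]) simp
  have G: "rc (Suc (Suc (Suc a))) GT Gf"
    unfolding GT_def
  proof (rule rc_cong[OF rc_mst[OF rc_Proj rc_Proj Cg]])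
    fix zs :: "nat list" assume l: "length zs = Suc (Suc (Suc a))"
    have "map (nth zs) [3..<a+3] = drop 3 zs" using map_nth_upt_drop[of zs "a+3" 3] l by simp
    then show "mstep (zs ! 0) (zs ! 1) (oenc (evb g (hd (map (\<lambda>g. g zs) ((\<lambda>zs. zs ! 2) # (\<lambda>zs. zs ! 0) # map (\<lambda>i zs. zs ! i) [3..<a+3])))
                  (tl (map (\<lambda>g. g zs) ((\<lambda>zs. zs ! 2) # (\<lambda>zs. zs ! 0) # map (\<lambda>i zs. zs ! i) [3..<a+3]))))) = Gf zs"
      unfolding Gf_def by (simp add: comp_def)
  qed simp_all
  have Pr: "rc (Suc (Suc a)) (Prim Z GT) (\<lambda>xs. pr (\<lambda>_. 0) Gf (hd xs) (tl xs))"
    by (rule rc_Prim[OF rc_Z G])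
  have Lo: "list_all2 (\<lambda>G g. rc (Suc a) G g) (Proj 0 # map Proj [0..<Suc a])
     ((\<lambda>zs. zs ! 0) # map (\<lambda>i zs. zs ! i) [0..<Suc a])"
    by (intro list_all2_Cons[THEN iffD2] conjI rc_Proj rc_projs ballI) auto
  have Co: "rc (Suc a) (Comp (Prim Z GT) (Proj 0 # map Proj [0..<Suc a]))
     (\<lambda>xs. pr (\<lambda>_. 0) Gf (hd (map (\<lambda>g. g xs) ((\<lambda>zs. zs ! 0) # map (\<lambda>i zs. zs ! i) [0..<Suc a])))
        (tl (map (\<lambda>g. g xs) ((\<lambda>zs. zs ! 0) # map (\<lambda>i zs. zs ! i) [0..<Suc a]))))"
    by (rule rc_Comp'[OF Pr _ Lo]) simp
  have tt: "T (Mn g) a = r_pred (Comp (Prim Z GT) (Proj 0 # map Proj [0..<Suc a]))"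
    by (simp add: GT_def)
  show ?thesis unfolding tt
  proof (rule rc_cong[OF rc_pred[OF Co]])
    fix xs :: "nat list" assume "length xs = Suc a"
    then obtain k ys where xs: "xs = k # ys" and ly: "length ys = a"
      by (auto simp: length_Suc_conv)
    have pe: "pr (\<lambda>_. 0) Gf j (k # ys) = mst (\<lambda>m. evb g k (m # ys)) j" for j
    proof (induction j)
      case 0 then show ?case by simp
    next
      case (Suc j)
      show ?case
        by (simp only: pr.simps Suc.IH) (simp add: Gf_def)
    qed
    have "map (nth xs) [0..<Suc a] = xs"
      using map_nth_upt_drop[of xs "Suc a" 0] ly xs by simp
    then show "pr (\<lambda>_. 0) Gf (hd (map (\<lambda>g. g xs) ((\<lambda>zs. zs ! 0) # map (\<lambda>i zs. zs ! i) [0..<Suc a])))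
        (tl (map (\<lambda>g. g xs) ((\<lambda>zs. zs ! 0) # map (\<lambda>i zs. zs ! i) [0..<Suc a]))) - 1 =
      oenc (evb (Mn g) (hd xs) (tl xs))"
      using pe[of k] by (simp add: xs comp_def Let_def) arith
  qed
qed

lemma rc_T: "rc (Suc a) (T f a) (\<lambda>xs. oenc (evb f (hd xs) (tl xs)))"
proof (induction f arbitrary: a)
  case Z
  show ?case unfolding T.simps by (rule rc_cong[OF rc_const]) simp
next
  case S
  show ?case
  proof (cases a)
    case 0 then show ?thesis by (auto intro!: rc_cong[OF rc_Z] simp: length_Suc_conv)
  next
    case (Suc b)
    have h: "rc (Suc a) (Comp S [Comp S [Proj 1]]) (\<lambda>xs. Suc (Suc (xs ! 1)))"
      by (intro rc_S rc_Proj) (simp add: Suc)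
    have tt: "T S a = Comp S [Comp S [Proj 1]]" by (simp add: Suc)
    show ?thesis unfolding tt by (rule rc_cong[OF h]) (auto simp: Suc length_Suc_conv)
  qed
next
  case (Proj i)
  show ?case
  proof (cases "i < a")
    case True
    have h: "rc (Suc a) (Comp S [Proj (Suc i)]) (\<lambda>xs. Suc (xs ! Suc i))"
      by (intro rc_S rc_Proj) (simp add: True)
    have tt: "T (Proj i) a = Comp S [Proj (Suc i)]" by (simp add: True)
    show ?thesis unfolding tt by (rule rc_cong[OF h]) (use True in \<open>auto simp: length_Suc_conv\<close>)
  next
    case False
    then show ?thesis by (auto intro!: rc_cong[OF rc_Z] simp: length_Suc_conv)
  qed
next
  case (Comp f gs)
  let ?o = "\<lambda>g xs. oenc (evb g (hd xs) (tl xs))"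
  have L1: "list_all2 (\<lambda>G g. rc (Suc a) G g) (map (\<lambda>g. T g a) gs) (map ?o gs)"
    unfolding list_all2_map1 list_all2_map2 by (rule list.rel_refl_strong) (use Comp.IH(2) in auto)
  note P = rc_PRODL[OF L1]
  have L2: "list_all2 (\<lambda>G g. rc (Suc a) G g) (Proj 0 # map (\<lambda>g. r_pred (T g a)) gs)
      ((\<lambda>xs. xs ! 0) # map (\<lambda>g xs. ?o g xs - 1) gs)"
  proof (rule list_all2_Cons[THEN iffD2], rule conjI)
    show "rc (Suc a) (Proj 0) (\<lambda>xs. xs ! 0)" by (rule rc_Proj) simp
    show "list_all2 (\<lambda>G g. rc (Suc a) G g) (map (\<lambda>g. r_pred (T g a)) gs) (map (\<lambda>g xs. ?o g xs - 1) gs)"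
      unfolding list_all2_map1 list_all2_map2
    proof (rule list.rel_refl_strong)
      fix z assume "z \<in> set gs"
      show "rc (Suc a) (r_pred (T z a)) (\<lambda>xs. ?o z xs - 1)" by (rule rc_pred) (rule Comp.IH(2)[OF \<open>z \<in> set gs\<close>])
    qed
  qed
  have "rc (length ((\<lambda>xs. xs ! 0) # map (\<lambda>g xs. ?o g xs - 1) gs)) (T f (length gs)) (?o f)"
    using Comp.IH(1)[of "length gs"] by simp
  note C = rc_Comp[OF this L2]
  have "rc (Suc a) (T (Comp f gs) a) (\<lambda>xs. prod_list (map (\<lambda>g. if g xs = 0 then 0 else 1) (map ?o gs)) *
      ?o f (map (\<lambda>g. g xs) ((\<lambda>xs. xs ! 0) # map (\<lambda>g xs. ?o g xs - 1) gs)))"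
    unfolding T.simps by (rule rc_mul[OF P C])
  then show ?case
  proof (rule rc_cong)
    fix xs :: "nat list" assume "length xs = Suc a"
    then obtain k ys where xs: "xs = k # ys" by (cases xs) auto
    show "prod_list (map (\<lambda>g. if g xs = 0 then 0 else 1) (map ?o gs)) *
      ?o f (map (\<lambda>g. g xs) ((\<lambda>xs. xs ! 0) # map (\<lambda>g xs. ?o g xs - 1) gs)) = ?o (Comp f gs) xs"
      using comp_eq[of k ys gs f] by (simp add: xs comp_def)
  qed
next
  case (Prim f g)
  then show ?case by (rule rc_T_Prim)
next
  case (Mn g)
  then show ?case by (rule rc_T_Mn)
qed

definition enc3 :: "nat \<Rightarrow> nat \<Rightarrow> nat \<Rightarrow> nat" where
  "enc3 p q b = prod_encode (p, prod_encode (q, b))"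
definition "c1 v = pfst v"
definition "c2 v = pfst (psnd v)"
definition "c3 v = psnd (psnd v)"

lemma c_enc3[simp]: "c1 (enc3 p q b) = p" "c2 (enc3 p q b) = q" "c3 (enc3 p q b) = b"
  by (simp_all add: c1_def c2_def c3_def enc3_def pfst_def psnd_def)

definition vstep :: "nat \<Rightarrow> nat \<Rightarrow> nat \<Rightarrow> (nat \<Rightarrow> nat) \<Rightarrow> nat" where
  "vstep n t c V = (let j = c div 4; m = c mod 4; va = V (pfst j); vb = V (psnd j);
     lt = (if Suc j \<le> n then 1 else 0) in
   if m = 0 then enc3 (pfst ((psnd ^^ j) t) * lt) 0 (1 - lt)
   else if m - 1 = 0 then (if j mod 2 = 0 then enc3 (j div 2) 0 0 else enc3 0 (Suc (j div 2)) 0)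
   else if m - 2 = 0 then enc3 (c1 va + c1 vb) (c2 va + c2 vb) (c3 va + c3 vb)
   else enc3 (c1 va * c1 vb + c2 va * c2 vb) (c1 va * c2 vb + c2 va * c1 vb) (c3 va + c3 vb))"

primrec hist :: "nat \<Rightarrow> nat \<Rightarrow> nat \<Rightarrow> nat" where
  "hist n t 0 = 0"
| "hist n t (Suc c) = prod_encode (vstep n t c (\<lambda>a. pfst ((psnd ^^ (c - 1 - a)) (hist n t c))), hist n t c)"

definition valc :: "nat \<Rightarrow> nat \<Rightarrow> nat \<Rightarrow> nat" where
  "valc n t c = pfst (hist n t (Suc c))"

lemma look: "a < c \<Longrightarrow> pfst ((psnd ^^ (c - 1 - a)) (hist n t c)) = valc n t a"
proof (induction c)
  case 0 then show ?case by simp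
next
  case (Suc c)
  show ?case
  proof (cases "a = c")
    case True then show ?thesis by (simp add: valc_def)
  next
    case False
    then have ac: "a < c" using Suc.prems by simp
    then have e: "Suc c - 1 - a = Suc (c - 1 - a)" by simp
    have "(psnd ^^ (Suc c - 1 - a)) (hist n t (Suc c)) = (psnd ^^ (c - 1 - a)) (hist n t c)"
      unfolding e funpow_Suc_right by (simp add: psnd_def)
    then show ?thesis using Suc.IH[OF ac] by simp
  qed
qed

lemma pfst_le: "pfst j \<le> j" and psnd_le: "psnd j \<le> j"
proof -
  obtain a b where "prod_decode j = (a, b)" by (cases "prod_decode j")
  moreover have "j = prod_encode (prod_decode j)" by simp
  ultimately show "pfst j \<le> j" "psnd j \<le> j" unfolding pfst_def psnd_def
    using le_prod_encode_1 le_prod_encode_2 by (metis fst_conv snd_conv)+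
qed

lemma vstep_cong: assumes "\<And>a. a < c \<Longrightarrow> V a = V' a" shows "vstep n t c V = vstep n t c V'"
proof (cases "c mod 4 < 2")
  case True
  then show ?thesis by (simp add: vstep_def Let_def)
next
  case False
  then have "2 \<le> c" by (metis mod_less not_less le_less_trans mod_le_divisor zero_less_numeral less_imp_le_nat)
  then have jc: "c div 4 < c" by simp
  have "V (pfst (c div 4)) = V' (pfst (c div 4))" "V (psnd (c div 4)) = V' (psnd (c div 4))"
    using assms pfst_le[of "c div 4"] psnd_le[of "c div 4"] jc by auto
  then show ?thesis by (simp add: vstep_def Let_def)
qed

lemma valc_eq: "valc n t c = vstep n t c (valc n t)"
proof -
  have "valc n t c = vstep n t c (\<lambda>a. pfst ((psnd ^^ (c - 1 - a)) (hist n t c)))"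
    by (simp add: valc_def pfst_def)
  also have "\<dots> = vstep n t c (valc n t)"
    by (rule vstep_cong) (rule look)
  finally show ?thesis .
qed

definition coord :: "nat \<Rightarrow> nat \<Rightarrow> nat" where "coord t i = pfst ((psnd ^^ i) t)"
definition xf :: "nat \<Rightarrow> nat \<Rightarrow> nat \<Rightarrow> nat" where "xf n t i = (if i < n then coord t i else 0)"

lemma int_decode_alt: "int_decode j = (if even j then int (j div 2) else - int (j div 2) - 1)"
  by (simp add: int_decode_def sum_decode_def)

lemma pfst_penc[simp]: "pfst (prod_encode (a, b)) = a" and psnd_penc[simp]: "psnd (prod_encode (a, b)) = b"
  by (simp_all add: pfst_def psnd_def)

lemma valc_correct: "int (c1 (valc n t (enc D))) - int (c2 (valc n t (enc D))) = dval (xf n t) D \<and>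
   (c3 (valc n t (enc D)) = 0 \<longleftrightarrow> vars D \<subseteq> {..<n})"
proof (induction D)
  case (Var i)
  show ?case unfolding valc_eq[of n t "enc (Var i)"] by (simp add: vstep_def Let_def xf_def coord_def)
next
  case (Const c)
  obtain j where j: "int_encode c = j" by simp
  have m: "Suc (4 * j) mod 4 = 1" "Suc (4 * j) div 4 = j" by simp_all
  have cd: "(if even j then int (j div 2) else - int (j div 2) - 1) = c"
    using j int_encode_inverse[of c] int_decode_alt[of j] by simp
  show ?case unfolding valc_eq[of n t "enc (Const c)"] using cd
    by (simp add: vstep_def Let_def m j odd_iff_mod_2_eq_one split: if_splits)
next
  case (Add a b)
  let ?j = "prod_encode (enc a, enc b)"
  have m: "(4 * ?j + 2) mod 4 = 2" "(4 * ?j + 2) div 4 = ?j"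
     "Suc (Suc (4 * ?j)) mod 4 = 2" "Suc (Suc (4 * ?j)) div 4 = ?j" by presburger+
  show ?case using Add.IH unfolding valc_eq[of n t "enc (Add a b)"] by (auto simp: vstep_def Let_def m)
next
  case (Mul a b)
  let ?j = "prod_encode (enc a, enc b)"
  have m: "(4 * ?j + 3) mod 4 = 3" "(4 * ?j + 3) div 4 = ?j"
     "Suc (Suc (Suc (4 * ?j))) mod 4 = 3" "Suc (Suc (Suc (4 * ?j))) div 4 = ?j" by presburger+
  let ?A = "valc n t (enc a)" and ?B = "valc n t (enc b)"
  have "int (c1 ?A * c1 ?B + c2 ?A * c2 ?B) - int (c1 ?A * c2 ?B + c2 ?A * c1 ?B) =
        (int (c1 ?A) - int (c2 ?A)) * (int (c1 ?B) - int (c2 ?B))"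
    by (simp add: algebra_simps)
  then show ?case using Mul.IH unfolding valc_eq[of n t "enc (Mul a b)"] by (auto simp: vstep_def Let_def m)
qed


definition "penc3 A B C = r_penc A (r_penc B C)"
lemma rc_penc3: "rc a A f \<Longrightarrow> rc a B g \<Longrightarrow> rc a C h \<Longrightarrow> rc a (penc3 A B C) (\<lambda>xs. enc3 (f xs) (g xs) (h xs))"
  unfolding penc3_def enc3_def by (intro rc_penc)

definition "LOOK A = r_fst (r_its (r_sub (r_pred (Proj 0)) A) (Proj 1))"
definition "JJ = r_div 4 (Proj 0)"
definition "MM = r_mod 4 (Proj 0)"
definition "C1 V = r_fst V"
definition "C2 V = r_fst (r_snd V)"
definition "C3 V = r_snd (r_snd V)"
definition "VA = LOOK (r_fst JJ)"
definition "VB = LOOK (r_snd JJ)"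
definition "LT = r_le (Comp S [JJ]) (Proj 2)"
definition "X0 = penc3 (r_mul (r_fst (r_its JJ (Proj 3))) LT) Z (r_sub (r_const 1) LT)"
definition "X1 = r_cond (r_mod 2 JJ) (penc3 (r_div 2 JJ) Z Z) (penc3 Z (Comp S [r_div 2 JJ]) Z)"
definition "X2 = penc3 (r_add (C1 VA) (C1 VB)) (r_add (C2 VA) (C2 VB)) (r_add (C3 VA) (C3 VB))"
definition "X3 = penc3 (r_add (r_mul (C1 VA) (C1 VB)) (r_mul (C2 VA) (C2 VB)))
   (r_add (r_mul (C1 VA) (C2 VB)) (r_mul (C2 VA) (C1 VB))) (r_add (C3 VA) (C3 VB))"
definition "STEPV = r_cond MM X0 (r_cond (r_pred MM) X1 (r_cond (r_sub MM (r_const 2)) X2 X3))"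
definition "STEP = r_penc STEPV (Proj 1)"

abbreviation "A4 \<equiv> Suc (Suc (Suc (Suc 0)))"

lemma rc_JJ: "rc A4 JJ (\<lambda>zs. zs ! 0 div 4)" unfolding JJ_def by (intro rc_div rc_Proj) simp_all
lemma rc_MM: "rc A4 MM (\<lambda>zs. zs ! 0 mod 4)" unfolding MM_def by (intro rc_mod rc_Proj) simp_all
lemma rc_LOOK: "rc A4 A f \<Longrightarrow> rc A4 (LOOK A) (\<lambda>zs. pfst ((psnd ^^ (zs ! 0 - 1 - f zs)) (zs ! 1)))"
  unfolding LOOK_def by (rule rc_cong, (rule rc_pfst rc_its rc_sub rc_pred rc_Proj | assumption | simp)+)
lemma rc_VA: "rc A4 VA (\<lambda>zs. pfst ((psnd ^^ (zs ! 0 - 1 - pfst (zs ! 0 div 4))) (zs ! 1)))"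
  unfolding VA_def by (intro rc_LOOK rc_pfst rc_JJ)
lemma rc_VB: "rc A4 VB (\<lambda>zs. pfst ((psnd ^^ (zs ! 0 - 1 - psnd (zs ! 0 div 4))) (zs ! 1)))"
  unfolding VB_def by (intro rc_LOOK rc_psnd rc_JJ)
lemma rc_C1: "rc a V v \<Longrightarrow> rc a (C1 V) (\<lambda>xs. c1 (v xs))" unfolding C1_def c1_def by (rule rc_pfst)
lemma rc_C2: "rc a V v \<Longrightarrow> rc a (C2 V) (\<lambda>xs. c2 (v xs))" unfolding C2_def c2_def by (intro rc_pfst rc_psnd)
lemma rc_C3: "rc a V v \<Longrightarrow> rc a (C3 V) (\<lambda>xs. c3 (v xs))" unfolding C3_def c3_def by (intro rc_psnd)
lemma rc_LT: "rc A4 LT (\<lambda>zs. if Suc (zs ! 0 div 4) \<le> zs ! 2 then 1 else 0)"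
  unfolding LT_def by (intro rc_le rc_S rc_JJ rc_Proj) simp

lemma rc_STEP: "rc A4 STEP (\<lambda>zs. prod_encode (vstep (zs ! 2) (zs ! 3) (zs ! 0) (\<lambda>a. pfst ((psnd ^^ (zs ! 0 - 1 - a)) (zs ! 1))), zs ! 1))"
  unfolding STEP_def STEPV_def X0_def X1_def X2_def X3_def
  apply (rule rc_cong)
   apply (rule rc_penc rc_cond rc_penc3 rc_mul rc_add rc_sub rc_pred rc_const rc_Z rc_S rc_mod rc_div
      rc_pfst rc_its rc_C1 rc_C2 rc_C3 rc_VA rc_VB rc_LT rc_JJ rc_MM rc_Proj | simp)+
  apply (simp add: vstep_def Let_def)
  done

definition "HIST = Prim Z STEP"
lemma rc_HIST: "rc (Suc (Suc (Suc 0))) HIST (\<lambda>xs. hist (xs ! 1) (xs ! 2) (xs ! 0))"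
proof -
  have 1: "rc (Suc (Suc (Suc 0))) HIST (\<lambda>xs. pr (\<lambda>_. 0) (\<lambda>zs. prod_encode (vstep (zs ! 2) (zs ! 3) (zs ! 0) (\<lambda>a. pfst ((psnd ^^ (zs ! 0 - 1 - a)) (zs ! 1))), zs ! 1)) (hd xs) (tl xs))"
    unfolding HIST_def by (rule rc_Prim[OF rc_Z rc_STEP])
  have 2: "pr (\<lambda>_. 0) (\<lambda>zs. prod_encode (vstep (zs ! 2) (zs ! 3) (zs ! 0) (\<lambda>a. pfst ((psnd ^^ (zs ! 0 - 1 - a)) (zs ! 1))), zs ! 1)) c [n, t] = hist n t c" for c n t
    by (induction c) simp_all
  show ?thesis
  proof (rule rc_cong[OF 1])
    fix xs :: "nat list" assume "length xs = Suc (Suc (Suc 0))"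
    then obtain c n t where xs: "xs = [c, n, t]" by (auto simp: length_Suc_conv)
    show "pr (\<lambda>_. 0) (\<lambda>zs. prod_encode (vstep (zs ! 2) (zs ! 3) (zs ! 0) (\<lambda>a. pfst ((psnd ^^ (zs ! 0 - 1 - a)) (zs ! 1))), zs ! 1)) (hd xs) (tl xs)
       = hist (xs ! 1) (xs ! 2) (xs ! 0)"
      unfolding xs list.sel by (simp only: 2) simp
  qed
qed

definition "r_val N E TT = r_fst (Comp HIST [Comp S [E], N, TT])"
lemma rc_val: "rc a N nn \<Longrightarrow> rc a E ee \<Longrightarrow> rc a TT tt \<Longrightarrow> rc a (r_val N E TT) (\<lambda>xs. valc (nn xs) (tt xs) (ee xs))"
  unfolding r_val_def valc_def
  by (rule rc_cong[OF rc_pfst[OF rc_c3[OF rc_HIST rc_S]]]) simp_all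

lemma enc_inj: "enc D1 = enc D2 \<Longrightarrow> D1 = D2"
proof (induction D1 arbitrary: D2)
  case (Var i) then show ?case by (cases D2) (simp_all, presburger+)
next
  case (Const c) then show ?case by (cases D2) (simp_all add: int_encode_eq, presburger+)
next
  case (Add a b) then show ?case by (cases D2) (simp_all, presburger+)
next
  case (Mul a b) then show ?case by (cases D2) (simp_all, presburger+)
qed

lemma enc_surj: "\<exists>D. enc D = e"
proof (induction e rule: less_induct)
  case (less e)
  let ?j = "e div 4"
  have j4: "e = 4 * ?j + e mod 4" by simp
  have "e mod 4 < 4" by simp
  then consider "e mod 4 = 0" | "e mod 4 = 1" | "e mod 4 = 2" | "e mod 4 = 3" by linarith
  then show ?case
  proof cases
    case 1 then show ?thesis using j4 by (intro exI[of _ "Var ?j"]) simp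
  next
    case 2 then show ?thesis using j4 by (intro exI[of _ "Const (int_decode ?j)"]) simp
  next
    case 3
    obtain a b where ab: "prod_decode ?j = (a, b)" by (cases "prod_decode ?j")
    have jab: "?j = prod_encode (a, b)" using prod_decode_inverse[of ?j] ab by simp
    have "?j < e" using 3 by linarith
    then have "a < e" "b < e" using jab le_prod_encode_1[of a b] le_prod_encode_2[of b a] by linarith+
    then obtain Da Db where "enc Da = a" "enc Db = b" using less by blast
    then show ?thesis using j4 3 jab by (intro exI[of _ "Add Da Db"]) simp
  next
    case 4
    obtain a b where ab: "prod_decode ?j = (a, b)" by (cases "prod_decode ?j")
    have jab: "?j = prod_encode (a, b)" using prod_decode_inverse[of ?j] ab by simp
    have "?j < e" using 4 by linarith
    then have "a < e" "b < e" using jab le_prod_encode_1[of a b] le_prod_encode_2[of b a] by linarith+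
    then obtain Da Db where "enc Da = a" "enc Db = b" using less by blast
    then show ?thesis using j4 4 jab by (intro exI[of _ "Mul Da Db"]) simp
  qed
qed

lemma dval_cong: "(\<And>i. i \<in> vars D \<Longrightarrow> x i = y i) \<Longrightarrow> dval x D = dval y D"
  by (induction D) auto

lemma sol_shift: assumes "dioph_eq n D" "solutions n D = {}" shows "solutions (Suc n) D = {}"
proof (rule ccontr)
  assume "solutions (Suc n) D \<noteq> {}"
  then obtain z where z: "\<forall>i\<ge>Suc n. z i = 0" "dval z D = 0" by (auto simp: solutions_def)
  have "dval (z(n := 0)) D = dval z D"
    by (rule dval_cong) (use assms(1) in \<open>auto simp: dioph_eq_def\<close>)
  then have "z(n := 0) \<in> solutions n D" using z by (auto simp: solutions_def)
  then show False using assms(2) by simp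
qed

lemma sol_inf: assumes "dioph_eq n D" "solutions n D \<noteq> {}" shows "infinite (solutions (Suc n) D)"
proof
  assume fin: "finite (solutions (Suc n) D)"
  obtain y where y: "y \<in> solutions n D" using assms(2) by auto
  have "range (\<lambda>m. y(n := m)) \<subseteq> solutions (Suc n) D"
  proof
    fix z assume "z \<in> range (\<lambda>m. y(n := m))"
    then obtain m where zm: "z = y(n := m)" by auto
    have "dval z D = dval y D" unfolding zm
      by (rule dval_cong) (use assms(1) in \<open>auto simp: dioph_eq_def\<close>)
    then show "z \<in> solutions (Suc n) D" using y zm by (auto simp: solutions_def)
  qed
  moreover have "inj (\<lambda>m. y(n := m))" by (rule injI) (drule fun_cong[of _ _ n], simp)
  ultimately have "finite (range (\<lambda>m::nat. y(n := m)))" using fin finite_subset by blast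
  then show False using \<open>inj (\<lambda>m. y(n := m))\<close> by (simp add: finite_image_iff)
qed

lemma coord_exists: "\<exists>t. \<forall>i<n. coord t i = y i"
proof (induction n arbitrary: y)
  case 0 then show ?case by simp
next
  case (Suc n)
  obtain t where t: "\<forall>i<n. coord t i = y (Suc i)" using Suc[of "\<lambda>i. y (Suc i)"] by blast
  have "\<forall>i<Suc n. coord (prod_encode (y 0, t)) i = y i"
  proof (intro allI impI)
    fix i assume i: "i < Suc n"
    show "coord (prod_encode (y 0, t)) i = y i"
    proof (cases i)
      case 0 then show ?thesis by (simp add: coord_def)
    next
      case (Suc i')
      then have "coord (prod_encode (y 0, t)) i = coord t i'"
        by (simp only: coord_def funpow_Suc_right comp_def psnd_penc)
      then show ?thesis using t Suc i by simp
    qed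
  qed
  then show ?case by blast
qed

lemma Solvable_iff: "prod_encode (n, enc D) \<in> Solvable \<longleftrightarrow> dioph_eq n D \<and> solutions n D \<noteq> {}"
  by (auto simp: Solvable_def code_def dest: enc_inj)

lemma FS_iff: "prod_encode (n, enc D) \<in> FinitelySolvable \<longleftrightarrow> dioph_eq n D \<and> finite (solutions n D)"
  by (auto simp: FinitelySolvable_def code_def dest: enc_inj)

lemma rc_Mn: "rc (Suc a) G g \<Longrightarrow> (\<And>xs. length xs = a \<Longrightarrow> \<exists>n. g (n # xs) = 0) \<Longrightarrow>
   rc a (Mn G) (\<lambda>xs. LEAST n. g (n # xs) = 0)"
  unfolding rc_def
proof (intro allI impI)
  fix xs :: "nat list" assume G: "\<forall>xs. length xs = Suc a \<longrightarrow> eval G xs (g xs)"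
    and tot: "\<And>xs. length xs = a \<Longrightarrow> \<exists>n. g (n # xs) = 0" and l: "length xs = a"
  let ?n = "LEAST n. g (n # xs) = 0"
  have g0: "g (?n # xs) = 0" using tot[OF l] by (rule LeastI_ex)
  have "eval G (?n # xs) (g (?n # xs))" using G l by simp
  then have "eval G (?n # xs) 0" by (simp only: g0)
  moreover have "\<forall>m<?n. \<exists>y>0. eval G (m # xs) y"
  proof (intro allI impI)
    fix m assume "m < ?n"
    then have "g (m # xs) \<noteq> 0" by (rule not_less_Least)
    moreover have "eval G (m # xs) (g (m # xs))" using G l by simp
    ultimately show "\<exists>y>0. eval G (m # xs) y" by blast
  qed
  ultimately show "eval (Mn G) xs ?n" by (rule eval_Mn)
qed


definition "NN = r_fst (Proj 1)"
definition "EE = r_snd (Proj 1)"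
definition "VV = r_val NN EE (Proj 0)"
definition "DIFF = r_add (r_sub (C1 VV) (C2 VV)) (r_sub (C2 VV) (C1 VV))"
definition "GS f = r_mul (r_mul (r_sub (r_const 1) (r_sg (C3 VV))) (r_sg DIFF))
   (r_sub (r_const 1) (r_sg (Comp (T f (Suc 0)) [Proj 0, r_penc (Comp S [NN]) EE])))"
definition "OUTT = r_mul (r_sub (r_const 1) (r_sg (C3 VV))) (r_sub (r_const 1) (r_sg DIFF))"
definition "DEC f = Comp OUTT [Mn (GS f), Proj 0]"

definition "vvf x s = valc (pfst x) s (psnd x)"
definition "haltf f x s = oenc (evb f s [prod_encode (Suc (pfst x), psnd x)])"
definition "gf f s x = (if c3 (vvf x s) = 0 then 1 else 0) * (if c1 (vvf x s) = c2 (vvf x s) then 0 else 1)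
   * (if haltf f x s = 0 then 1 else (0::nat))"
definition "outf s x = (if c3 (vvf x s) = 0 then 1 else 0) * (if c1 (vvf x s) = c2 (vvf x s) then 1 else (0::nat))"

lemma gf_zero: "gf f s x = 0 \<longleftrightarrow> (c3 (vvf x s) \<noteq> 0 \<or> c1 (vvf x s) = c2 (vvf x s) \<or> haltf f x s \<noteq> 0)"
  by (simp add: gf_def)

abbreviation "A2 \<equiv> Suc (Suc 0)"

lemma rc_VV: "rc A2 VV (\<lambda>zs. vvf (zs ! 1) (zs ! 0))"
  unfolding VV_def NN_def EE_def vvf_def
  by (rule rc_cong[OF rc_val[OF rc_pfst[OF rc_Proj] rc_psnd[OF rc_Proj] rc_Proj]]) simp_all

lemma rc_GS: "rc A2 (GS f) (\<lambda>zs. gf f (zs ! 0) (zs ! 1))"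
  unfolding GS_def DIFF_def
  apply (rule rc_cong)
   apply (rule rc_mul rc_sub rc_const rc_sg rc_add rc_C1 rc_C2 rc_C3 rc_VV rc_c2[OF rc_T] rc_penc rc_S
     rc_pfst rc_psnd rc_Proj | simp add: NN_def EE_def)+
  apply (auto simp: gf_def haltf_def)
  done

lemma rc_OUTT: "rc A2 OUTT (\<lambda>zs. outf (zs ! 0) (zs ! 1))"
  unfolding OUTT_def DIFF_def
  apply (rule rc_cong)
   apply (rule rc_mul rc_sub rc_const rc_sg rc_add rc_C1 rc_C2 rc_C3 rc_VV rc_Proj | simp)+
  apply (auto simp: outf_def)
  done

lemma rc_DEC: assumes "\<And>x. \<exists>s. gf f s x = 0"
  shows "rc (Suc 0) (DEC f) (\<lambda>xs. outf (LEAST s. gf f s (xs ! 0) = 0) (xs ! 0))"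
proof -
  have M: "rc (Suc 0) (Mn (GS f)) (\<lambda>xs. LEAST s. gf f s (xs ! 0) = 0)"
    by (rule rc_cong[OF rc_Mn[OF rc_GS]]) (auto simp: assms)
  show ?thesis unfolding DEC_def
    by (rule rc_cong[OF rc_c2[OF rc_OUTT M rc_Proj]]) simp_all
qed

theorem mainTheorem12:
  assumes "\<not> recursive_set Solvable"
  shows "\<not> re_set FinitelySolvable"
proof
  assume "re_set FinitelySolvable"
  then obtain f where f: "\<And>x. x \<in> FinitelySolvable \<longleftrightarrow> (\<exists>y. eval f [x] y)"
    unfolding re_set_def by blast
  have dec: "\<exists>D. x = prod_encode (pfst x, enc D)" for x
  proof -
    obtain D where "enc D = psnd x" using enc_surj by blast
    moreover have "x = prod_encode (pfst x, psnd x)" unfolding pfst_def psnd_def by simp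
    ultimately show ?thesis by metis
  qed
  have facts: "c3 (vvf x s) = 0 \<longleftrightarrow> dioph_eq n D"
    "int (c1 (vvf x s)) - int (c2 (vvf x s)) = dval (xf n s) D"
    "haltf f x s \<noteq> 0 \<longleftrightarrow> (\<exists>y. evb f s [prod_encode (Suc n, enc D)] = Some y)"
    if x: "x = prod_encode (n, enc D)" for x s n D
  proof -
    have v: "vvf x s = valc n s (enc D)" using x by (simp add: vvf_def)
    show "c3 (vvf x s) = 0 \<longleftrightarrow> dioph_eq n D" using valc_correct[of n s D] v by (simp add: dioph_eq_def)
    show "int (c1 (vvf x s)) - int (c2 (vvf x s)) = dval (xf n s) D" using valc_correct[of n s D] v by simp
    show "haltf f x s \<noteq> 0 \<longleftrightarrow> (\<exists>y. evb f s [prod_encode (Suc n, enc D)] = Some y)"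
      using x by (cases "evb f s [prod_encode (Suc n, enc D)]") (auto simp: haltf_def)
  qed
  have tot: "\<exists>s. gf f s x = 0" for x
  proof -
    obtain D where x: "x = prod_encode (pfst x, enc D)" using dec by blast
    let ?n = "pfst x"
    show ?thesis
    proof (cases "dioph_eq ?n D")
      case False
      then show ?thesis using facts(1)[OF x, of 0] by (auto simp: gf_def)
    next
      case dio: True
      show ?thesis
      proof (cases "solutions ?n D = {}")
        case False
        then obtain y where y: "y \<in> solutions ?n D" by auto
        obtain t where t: "\<forall>i<?n. coord t i = y i" using coord_exists by blast
        have "xf ?n t = y" using t y by (auto simp: xf_def solutions_def)
        then have "dval (xf ?n t) D = 0" using y by (simp add: solutions_def)
        then have "c1 (vvf x t) = c2 (vvf x t)" using facts(2)[OF x, of t] by simp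
        then show ?thesis by (auto simp: gf_def)
      next
        case True
        then have "solutions (Suc ?n) D = {}" using sol_shift dio by blast
        moreover have "dioph_eq (Suc ?n) D" using dio by (auto simp: dioph_eq_def)
        ultimately have "prod_encode (Suc ?n, enc D) \<in> FinitelySolvable" by (simp add: FS_iff)
        then obtain z where "eval f [prod_encode (Suc ?n, enc D)] z" using f by blast
        then obtain k where "evb f k [prod_encode (Suc ?n, enc D)] = Some z" using evb_complete by blast
        then have "haltf f x k \<noteq> 0" using facts(3)[OF x, of k] by blast
        then show ?thesis by (intro exI[of _ k]) (simp add: gf_def)
      qed
    qed
  qed
  have out: "outf (LEAST s. gf f s x = 0) x = (if x \<in> Solvable then 1 else 0)" for x
  proof -
    obtain D where x: "x = prod_encode (pfst x, enc D)" using dec by blast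
    let ?n = "pfst x" and ?s = "LEAST s. gf f s x = 0"
    have g0: "gf f ?s x = 0" using tot[of x] by (rule LeastI_ex)
    show ?thesis
    proof (cases "dioph_eq ?n D")
      case False
      then have "x \<notin> Solvable" using Solvable_iff x by metis
      then show ?thesis using facts(1)[OF x, of ?s] False by (simp add: outf_def)
    next
      case dio: True
      show ?thesis
      proof (cases "c1 (vvf x ?s) = c2 (vvf x ?s)")
        case True
        then have "dval (xf ?n ?s) D = 0" using facts(2)[OF x, of ?s] by simp
        then have "xf ?n ?s \<in> solutions ?n D" by (simp add: solutions_def xf_def)
        then have "x \<in> Solvable" using Solvable_iff[of ?n D] dio x by auto
        then show ?thesis using facts(1)[OF x, of ?s] dio True by (simp add: outf_def)
      next
        case False
        have "c3 (vvf x ?s) = 0" using facts(1)[OF x, of ?s] dio by blast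
        then have "haltf f x ?s \<noteq> 0" using gf_zero[of f ?s x, THEN iffD1, OF g0] False by blast
        then obtain z where "evb f ?s [prod_encode (Suc ?n, enc D)] = Some z" using facts(3)[OF x] by blast
        then have "eval f [prod_encode (Suc ?n, enc D)] z" by (rule evb_sound)
        then have "prod_encode (Suc ?n, enc D) \<in> FinitelySolvable" using f by blast
        then have "finite (solutions (Suc ?n) D)" by (simp add: FS_iff)
        then have "solutions ?n D = {}" using sol_inf dio by blast
        then have "x \<notin> Solvable" using Solvable_iff[of ?n D] x by auto
        then show ?thesis using False by (simp add: outf_def)
      qed
    qed
  qed
  have "rc (Suc 0) (DEC f) (\<lambda>xs. outf (LEAST s. gf f s (xs ! 0) = 0) (xs ! 0))"
    using rc_DEC tot by blast
  then have "\<forall>x. eval (DEC f) [x] (if x \<in> Solvable then 1 else 0)"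
    unfolding rc_def using out by (metis length_Cons list.size(3) nth_Cons_0)
  then have "recursive_set Solvable" unfolding recursive_set_def by blast
  with assms show False by contradiction
qed

end
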